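(* Let $\mathcal X_1,\mathcal X_2$ each be either $(0,1)$ or $(0,1)^\infty$, let $\mu_1,\mu_2$ be probability measures on $\mathcal X_1,\mathcal X_2$ respectively, and let $B\subset\mathcal X_1\times\mathcal X_2$ be a Borel set. Assume that $S_{\mu_1-\nu_1,\mu_2-\nu_2}(B)=S_{\mu_1,\mu_2}(B)-\nu(B)$ for every positive measure $\nu$ on $B$ whose marginals $\nu_1,\nu_2$ satisfy $\nu_1\le\mu_1$ and $\nu_2\le\mu_2$. Then the supremum $S_{\mu_1,\mu_2}(B)$ is attained: there is a probability measure $\mu$ on $\mathcal X_1\times\mathcal X_2$ with marginals $\mu_1,\mu_2$ and $\mu(B)=S_{\mu_1,\mu_2}(B)$.
   Context: For finite positive measures $\lambda_1,\lambda_2$ on $\mathcal X_1,\mathcal X_2$ with $\lambda_1(\mathcal X_1)=\lambda_2(\mathcal X_2)$, and a Borel set $B\subset\mathcal X_1\times\mathcal X_2$, define $S_{\lambda_1,\lambda_2}(B)$ as the supremum of $\lambda(B)$ over all positive measures $\lambda$ on $\mathcal X_1\times\mathcal X_2$ with marginals $\lambda_1,\lambda_2$. *)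

theory Defs
  imports "HOL-Probability.Probability"
begin

definition unit_interval :: "real measure" where
  "unit_interval = restrict_space borel {0<..<1}"

text \<open>The countable product (0,1)^\<infinity> with its Borel (= product) sigma-algebra.\<close>
definition unit_cube_inf :: "(nat \<Rightarrow> real) measure" where
  "unit_cube_inf = PiM UNIV (\<lambda>_. unit_interval)"

definition meas_iso :: "'a measure \<Rightarrow> 'b measure \<Rightarrow> bool" where
  "meas_iso M N \<longleftrightarrow> (\<exists>f g. f \<in> M \<rightarrow>\<^sub>M N \<and> g \<in> N \<rightarrow>\<^sub>M M \<and>
      (\<forall>x\<in>space M. g (f x) = x) \<and> (\<forall>y\<in>space N. f (g y) = y))"

definition paper_space :: "'a measure \<Rightarrow> bool" where
  "paper_space M \<longleftrightarrow> meas_iso M unit_interval \<or> meas_iso M unit_cube_inf"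

definition marg1 :: "('a \<times> 'b) measure \<Rightarrow> 'a measure \<Rightarrow> 'a measure" where
  "marg1 l M1 = distr l M1 fst"
definition marg2 :: "('a \<times> 'b) measure \<Rightarrow> 'b measure \<Rightarrow> 'b measure" where
  "marg2 l M2 = distr l M2 snd"

definition couplings :: "'a measure \<Rightarrow> 'b measure \<Rightarrow> 'a measure \<Rightarrow> 'b measure
    \<Rightarrow> ('a \<times> 'b) measure set" where
  "couplings M1 M2 l1 l2 = {l. sets l = sets (M1 \<Otimes>\<^sub>M M2) \<and>
      marg1 l M1 = l1 \<and> marg2 l M2 = l2}"

definition S_sup :: "'a measure \<Rightarrow> 'b measure \<Rightarrow> 'a measure \<Rightarrow> 'b measure
    \<Rightarrow> ('a \<times> 'b) set \<Rightarrow> ennreal" where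
  "S_sup M1 M2 l1 l2 B = (SUP l\<in>couplings M1 M2 l1 l2. emeasure l B)"

text \<open>Difference of measures M - N (used only when N \<le> M setwise, N finite).\<close>
definition measure_diff :: "'a measure \<Rightarrow> 'a measure \<Rightarrow> 'a measure" where
  "measure_diff M N = measure_of (space M) (sets M) (\<lambda>A. emeasure M A - emeasure N A)"

end

theory Submission
  imports Defs
begin


definition madd :: "'a measure \<Rightarrow> 'a measure \<Rightarrow> 'a measure" where
  "madd M N = measure_of (space M) (sets M) (\<lambda>A. emeasure M A + emeasure N A)"

lemma madd_props:
  assumes "sets N = sets M"
  shows "sets (madd M N) = sets M" "space (madd M N) = space M"
    "A \<in> sets M \<Longrightarrow> emeasure (madd M N) A = emeasure M A + emeasure N A"
proof -
  show s: "sets (madd M N) = sets M" unfolding madd_def by simp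
  show "space (madd M N) = space M" unfolding madd_def by simp
  assume A: "A \<in> sets M"
  have ca: "countably_additive (sets M) (\<lambda>A. emeasure M A + emeasure N A)"
    unfolding countably_additive_def
  proof (intro allI impI)
    fix F :: "nat \<Rightarrow> _" assume F: "range F \<subseteq> sets M" "disjoint_family F" "\<Union> (range F) \<in> sets M"
    have "(\<Sum>i. emeasure M (F i) + emeasure N (F i)) = (\<Sum>i. emeasure M (F i)) + (\<Sum>i. emeasure N (F i))"
      by (simp add: suminf_add)
    also have "\<dots> = emeasure M (\<Union> (range F)) + emeasure N (\<Union> (range F))"
      using F assms by (simp add: suminf_emeasure)
    finally show "(\<Sum>i. emeasure M (F i) + emeasure N (F i)) = emeasure M (\<Union> (range F)) + emeasure N (\<Union> (range F))" .
  qed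
  have pos: "positive (sets M) (\<lambda>A. emeasure M A + emeasure N A)"
    by (simp add: positive_def)
  show "emeasure (madd M N) A = emeasure M A + emeasure N A"
    unfolding madd_def by (rule emeasure_measure_of_sigma[OF sets.sigma_algebra_axioms pos ca A])
qed

lemma mdiff_props:
  assumes "sets N = sets M" "\<And>A. A \<in> sets M \<Longrightarrow> emeasure N A \<le> emeasure M A"
    "emeasure N (space N) \<noteq> \<infinity>"
  shows "sets (measure_diff M N) = sets M" "space (measure_diff M N) = space M"
    "A \<in> sets M \<Longrightarrow> emeasure (measure_diff M N) A = emeasure M A - emeasure N A"
proof -
  show s: "sets (measure_diff M N) = sets M" unfolding measure_diff_def by simp
  show "space (measure_diff M N) = space M" unfolding measure_diff_def by simp
  assume A: "A \<in> sets M"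
  have fin: "emeasure N X \<noteq> \<infinity>" for X
    using assms(3) by (metis emeasure_space infinity_ennreal_def top.extremum_unique)
  have ca: "countably_additive (sets M) (\<lambda>A. emeasure M A - emeasure N A)"
    unfolding countably_additive_def
  proof (intro allI impI)
    fix F :: "nat \<Rightarrow> _" assume F: "range F \<subseteq> sets M" "disjoint_family F" "\<Union> (range F) \<in> sets M"
    have "(\<Sum>i. emeasure M (F i) - emeasure N (F i)) + (\<Sum>i. emeasure N (F i)) = (\<Sum>i. emeasure M (F i) - emeasure N (F i) + emeasure N (F i))"
      by (simp add: suminf_add)
    also have "\<dots> = (\<Sum>i. emeasure M (F i))"
      using F assms(2) by (intro suminf_cong diff_add_cancel_ennreal) auto
    also have "\<dots> = emeasure M (\<Union> (range F))"
      using F by (simp add: suminf_emeasure)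
    finally have e: "(\<Sum>i. emeasure M (F i) - emeasure N (F i)) + emeasure N (\<Union> (range F)) = emeasure M (\<Union> (range F))"
      using F assms(1) by (simp add: suminf_emeasure)
    show "(\<Sum>i. emeasure M (F i) - emeasure N (F i)) = emeasure M (\<Union> (range F)) - emeasure N (\<Union> (range F))"
      using e[symmetric] fin by simp
  qed
  have pos: "positive (sets M) (\<lambda>A. emeasure M A - emeasure N A)"
    by (simp add: positive_def)
  show "emeasure (measure_diff M N) A = emeasure M A - emeasure N A"
    unfolding measure_diff_def by (rule emeasure_measure_of_sigma[OF sets.sigma_algebra_axioms pos ca A])
qed

definition msup :: "(nat \<Rightarrow> 'a measure) \<Rightarrow> 'a measure" where
  "msup f = measure_of (space (f 0)) (sets (f 0)) (\<lambda>A. SUP n. emeasure (f n) A)"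

lemma msup_props:
  assumes "\<And>n. sets (f n) = sets (f 0)" "\<And>A. A \<in> sets (f 0) \<Longrightarrow> incseq (\<lambda>n. emeasure (f n) A)"
  shows "sets (msup f) = sets (f 0)" "space (msup f) = space (f 0)"
    "A \<in> sets (f 0) \<Longrightarrow> emeasure (msup f) A = (SUP n. emeasure (f n) A)"
proof -
  show s: "sets (msup f) = sets (f 0)" unfolding msup_def by simp
  show "space (msup f) = space (f 0)" unfolding msup_def by simp
  assume A: "A \<in> sets (f 0)"
  have ca: "countably_additive (sets (f 0)) (\<lambda>A. SUP n. emeasure (f n) A)"
    unfolding countably_additive_def
  proof (intro allI impI)
    fix F :: "nat \<Rightarrow> _" assume F: "range F \<subseteq> sets (f 0)" "disjoint_family F" "\<Union> (range F) \<in> sets (f 0)"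
    have "(\<Sum>i. SUP n. emeasure (f n) (F i)) = (SUP n. \<Sum>i. emeasure (f n) (F i))"
      using F assms(2) by (intro ennreal_suminf_SUP_eq) auto
    also have "\<dots> = (SUP n. emeasure (f n) (\<Union> (range F)))"
      using F assms(1) by (intro SUP_cong refl suminf_emeasure) auto
    finally show "(\<Sum>i. SUP n. emeasure (f n) (F i)) = (SUP n. emeasure (f n) (\<Union> (range F)))" .
  qed
  have pos: "positive (sets (f 0)) (\<lambda>A. SUP n. emeasure (f n) A)"
    by (simp add: positive_def)
  show "emeasure (msup f) A = (SUP n. emeasure (f n) A)"
    unfolding msup_def by (rule emeasure_measure_of_sigma[OF sets.sigma_algebra_axioms pos ca A])
qed



lemma marg1_eq:
  assumes "sets nu = sets (M1 \<Otimes>\<^sub>M M2)" "A \<in> sets M1"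
  shows "emeasure (marg1 nu M1) A = emeasure nu (A \<times> space M2)"
proof -
  have m: "fst \<in> nu \<rightarrow>\<^sub>M M1" using measurable_cong_sets[OF assms(1) refl] measurable_fst by blast
  have sp: "space nu = space M1 \<times> space M2" using sets_eq_imp_space_eq[OF assms(1)] by (simp add: space_pair_measure)
  have "fst -` A \<inter> space nu = A \<times> space M2"
    using sp sets.sets_into_space[OF assms(2)] by auto
  then show ?thesis unfolding marg1_def using emeasure_distr[OF m assms(2)] by simp
qed

lemma marg2_eq:
  assumes "sets nu = sets (M1 \<Otimes>\<^sub>M M2)" "A \<in> sets M2"
  shows "emeasure (marg2 nu M2) A = emeasure nu (space M1 \<times> A)"
proof -
  have m: "snd \<in> nu \<rightarrow>\<^sub>M M2" using measurable_cong_sets[OF assms(1) refl] measurable_snd by blast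
  have sp: "space nu = space M1 \<times> space M2" using sets_eq_imp_space_eq[OF assms(1)] by (simp add: space_pair_measure)
  have "snd -` A \<inter> space nu = space M1 \<times> A"
    using sp sets.sets_into_space[OF assms(2)] by auto
  then show ?thesis unfolding marg2_def using emeasure_distr[OF m assms(2)] by simp
qed

lemma sets_marg1: "sets (marg1 nu M1) = sets M1" by (simp add: marg1_def)
lemma sets_marg2: "sets (marg2 nu M2) = sets M2" by (simp add: marg2_def)

lemma prod_coupling:
  assumes "sets r1 = sets M1" "sets r2 = sets M2"
    "emeasure r1 (space r1) = m" "emeasure r2 (space r2) = m" "m \<noteq> \<infinity>"
  defines "rho \<equiv> scale_measure (1 / m) (r1 \<Otimes>\<^sub>M r2)"
  shows "sets rho = sets (M1 \<Otimes>\<^sub>M M2)"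
    "\<And>A. A \<in> sets M1 \<Longrightarrow> emeasure rho (A \<times> space M2) = emeasure r1 A"
    "\<And>A. A \<in> sets M2 \<Longrightarrow> emeasure rho (space M1 \<times> A) = emeasure r2 A"
proof -
  have sp1: "space r1 = space M1" using sets_eq_imp_space_eq[OF assms(1)] .
  have sp2: "space r2 = space M2" using sets_eq_imp_space_eq[OF assms(2)] .
  interpret f1: finite_measure r1 using assms(3,5) by (intro finite_measureI) auto
  interpret f2: finite_measure r2 using assms(4,5) by (intro finite_measureI) auto
  have k: "(1 / m) * (a * m) = a" if "a \<le> m" for a
  proof (cases "m = 0")
    case True then show ?thesis using that by simp
  next
    case False
    have "(1 / m) * (a * m) = (a * m) / m" by (simp add: ennreal_divide_times)
    then show ?thesis using False assms(5) by (simp add: ennreal_mult_divide_eq top_unique)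
  qed
  show "sets rho = sets (M1 \<Otimes>\<^sub>M M2)" unfolding rho_def sets_scale_measure
    by (rule sets_pair_measure_cong[OF assms(1,2)])
  show "emeasure rho (A \<times> space M2) = emeasure r1 A" if A: "A \<in> sets M1" for A
  proof -
    have "emeasure (r1 \<Otimes>\<^sub>M r2) (A \<times> space M2) = emeasure r1 A * m"
      using f2.emeasure_pair_measure_Times[of A r1 "space r2"] A assms(1,4) sp2 sets.top[of r2] by simp
    moreover have "emeasure r1 A \<le> m" using assms(3) emeasure_space[of r1 A] by simp
    ultimately show ?thesis unfolding rho_def using k by simp
  qed
  show "emeasure rho (space M1 \<times> A) = emeasure r2 A" if A: "A \<in> sets M2" for A
  proof -
    have "emeasure (r1 \<Otimes>\<^sub>M r2) (space M1 \<times> A) = m * emeasure r2 A"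
      using f2.emeasure_pair_measure_Times[of "space r1" r1 A] A assms(2,3) sp1 sets.top[of r1] by simp
    moreover have "emeasure r2 A \<le> m" using assms(4) emeasure_space[of r2 A] by simp
    moreover have "m * emeasure r2 A = emeasure r2 A * m" by (rule mult.commute)
    ultimately show ?thesis unfolding rho_def using k[of "emeasure r2 A"] by simp
  qed
qed



lemma S_sup_le:
  assumes "B \<in> sets (M1 \<Otimes>\<^sub>M M2)"
  shows "S_sup M1 M2 l1 l2 B \<le> emeasure l1 (space M1)"
  unfolding S_sup_def
proof (rule SUP_least)
  fix l assume "l \<in> couplings M1 M2 l1 l2"
  then have l: "sets l = sets (M1 \<Otimes>\<^sub>M M2)" "marg1 l M1 = l1" by (auto simp: couplings_def)
  have sp: "space l = space M1 \<times> space M2"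
    using sets_eq_imp_space_eq[OF l(1)] by (simp add: space_pair_measure)
  have "emeasure l B \<le> emeasure l (space l)" by (rule emeasure_space)
  also have "\<dots> = emeasure (marg1 l M1) (space M1)"
    using marg1_eq[OF l(1) sets.top[of M1]] sp by simp
  finally show "emeasure l B \<le> emeasure l1 (space M1)" using l(2) by simp
qed

lemma ennr_a: "(a::ennreal) - b - e < c \<Longrightarrow> a \<le> b + c + e"
proof -
  assume h: "a - b - e < c"
  then have "a - b - e \<le> c" by simp
  then have "a - b \<le> e + c" unfolding ennreal_minus_le_iff by auto
  then have "a \<le> b + (e + c)" unfolding ennreal_minus_le_iff by (auto simp: top_add)
  then show ?thesis by (simp add: ac_simps)
qed

lemma ennr_b: "(s::ennreal) \<noteq> \<infinity> \<Longrightarrow> 0 < s \<Longrightarrow> 0 < e \<Longrightarrow> s - ennreal e < s"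
  by (rule ennreal_between) (auto simp: top.not_eq_extremum)



theorem lemma3p6:
  fixes M1 :: "'a measure" and M2 :: "'b measure"
    and mu1 :: "'a measure" and mu2 :: "'b measure"
    and B :: "('a \<times> 'b) set"
  assumes "paper_space M1" and "paper_space M2"
    and "prob_space mu1" and "sets mu1 = sets M1"
    and "prob_space mu2" and "sets mu2 = sets M2"
    and "B \<in> sets (M1 \<Otimes>\<^sub>M M2)"
    and "\<And>nu. sets nu = sets (M1 \<Otimes>\<^sub>M M2) \<Longrightarrow>
           emeasure nu (space (M1 \<Otimes>\<^sub>M M2) - B) = 0 \<Longrightarrow>
           (\<forall>A\<in>sets M1. emeasure (marg1 nu M1) A \<le> emeasure mu1 A) \<Longrightarrow>
           (\<forall>A\<in>sets M2. emeasure (marg2 nu M2) A \<le> emeasure mu2 A) \<Longrightarrow>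
           S_sup M1 M2 (measure_diff mu1 (marg1 nu M1)) (measure_diff mu2 (marg2 nu M2)) B
             = S_sup M1 M2 mu1 mu2 B - emeasure nu B"
  shows "\<exists>mu\<in>couplings M1 M2 mu1 mu2. prob_space mu \<and> emeasure mu B = S_sup M1 M2 mu1 mu2 B"
proof -
  define \<Omega> where "\<Omega> = space (M1 \<Otimes>\<^sub>M M2)"
  define \<Sigma> where "\<Sigma> = sets (M1 \<Otimes>\<^sub>M M2)"
  define S where "S = S_sup M1 M2 mu1 mu2 B"
  have Om: "\<Omega> = space M1 \<times> space M2" unfolding \<Omega>_def by (simp add: space_pair_measure)
  have sp1: "space mu1 = space M1" using sets_eq_imp_space_eq[OF assms(4)] .
  have sp2: "space mu2 = space M2" using sets_eq_imp_space_eq[OF assms(6)] .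
  have one1: "emeasure mu1 (space M1) = 1" using prob_space.emeasure_space_1[OF assms(3)] sp1 by simp
  have one2: "emeasure mu2 (space M2) = 1" using prob_space.emeasure_space_1[OF assms(5)] sp2 by simp
  have Bs: "B \<in> \<Sigma>" using assms(7) unfolding \<Sigma>_def .
  have B\<Omega>: "B \<subseteq> \<Omega>" using sets.sets_into_space[OF assms(7)] unfolding \<Omega>_def .
  have R1: "A \<times> space M2 \<in> \<Sigma>" if "A \<in> sets M1" for A
    unfolding \<Sigma>_def using that by (rule pair_measureI[OF _ sets.top])
  have R2: "space M1 \<times> A \<in> \<Sigma>" if "A \<in> sets M2" for A
    unfolding \<Sigma>_def using that by (rule pair_measureI[OF sets.top])
  have \<Omega>s: "\<Omega> \<in> \<Sigma>" unfolding \<Omega>_def \<Sigma>_def by (rule sets.top)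
  have DB: "\<Omega> - B \<in> \<Sigma>" unfolding \<Omega>_def \<Sigma>_def using assms(7) by auto
  define good where "good nu \<longleftrightarrow> sets nu = \<Sigma> \<and> emeasure nu (\<Omega> - B) = 0 \<and>
      (\<forall>A\<in>sets M1. emeasure (marg1 nu M1) A \<le> emeasure mu1 A) \<and>
      (\<forall>A\<in>sets M2. emeasure (marg2 nu M2) A \<le> emeasure mu2 A)" for nu :: "('a \<times> 'b) measure"
  have resid1: "sets (measure_diff mu1 (marg1 nu M1)) = sets M1 \<and>
      (\<forall>A\<in>sets M1. emeasure (measure_diff mu1 (marg1 nu M1)) A = emeasure mu1 A - emeasure (marg1 nu M1) A)
      \<and> emeasure (marg1 nu M1) (space M1) \<le> 1"
    if "sets nu = \<Sigma>" "\<forall>A\<in>sets M1. emeasure (marg1 nu M1) A \<le> emeasure mu1 A" for nu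
  proof -
    have s: "sets (marg1 nu M1) = sets mu1" using assms(4) by (simp add: sets_marg1)
    have spm: "space (marg1 nu M1) = space M1" by (simp add: marg1_def)
    have le1: "emeasure (marg1 nu M1) (space M1) \<le> 1" using that(2)[rule_format, OF sets.top[of M1]] one1 by simp
    have fin: "emeasure (marg1 nu M1) (space (marg1 nu M1)) \<noteq> \<infinity>" using le1 spm
      by (auto simp: top_unique)
    note md = mdiff_props[OF s _ fin]
    show ?thesis using md that(2) le1 assms(4) by auto
  qed
  have resid2: "sets (measure_diff mu2 (marg2 nu M2)) = sets M2 \<and>
      (\<forall>A\<in>sets M2. emeasure (measure_diff mu2 (marg2 nu M2)) A = emeasure mu2 A - emeasure (marg2 nu M2) A)
      \<and> emeasure (marg2 nu M2) (space M2) \<le> 1"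
    if "sets nu = \<Sigma>" "\<forall>A\<in>sets M2. emeasure (marg2 nu M2) A \<le> emeasure mu2 A" for nu
  proof -
    have s: "sets (marg2 nu M2) = sets mu2" using assms(6) by (simp add: sets_marg2)
    have spm: "space (marg2 nu M2) = space M2" by (simp add: marg2_def)
    have le1: "emeasure (marg2 nu M2) (space M2) \<le> 1" using that(2)[rule_format, OF sets.top[of M2]] one2 by simp
    have fin: "emeasure (marg2 nu M2) (space (marg2 nu M2)) \<noteq> \<infinity>" using le1 spm
      by (auto simp: top_unique)
    note md = mdiff_props[OF s _ fin]
    show ?thesis using md that(2) le1 assms(6) by auto
  qed
  have addle: "x + (y - x) = (y::ennreal)" if "x \<le> y" for x y
    using diff_add_cancel_ennreal[OF that] by (simp add: add.commute)
  have step: "\<exists>d. sets d = \<Sigma> \<and> good (madd nu d) \<and> S \<le> emeasure (madd nu d) B + ennreal e"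
    if g: "good nu" and e: "0 < e" for nu e
  proof -
    have gs: "sets nu = \<Sigma>" and g0: "emeasure nu (\<Omega> - B) = 0"
      and gm1: "\<forall>A\<in>sets M1. emeasure (marg1 nu M1) A \<le> emeasure mu1 A"
      and gm2: "\<forall>A\<in>sets M2. emeasure (marg2 nu M2) A \<le> emeasure mu2 A"
      using g unfolding good_def by auto
    define r1 where "r1 = measure_diff mu1 (marg1 nu M1)"
    define r2 where "r2 = measure_diff mu2 (marg2 nu M2)"
    have hyp: "S_sup M1 M2 r1 r2 B = S - emeasure nu B"
      unfolding r1_def r2_def S_def
      using assms(8)[of nu] gs g0 gm1 gm2 unfolding \<Sigma>_def \<Omega>_def by blast
    have rr1: "\<forall>A\<in>sets M1. emeasure r1 A = emeasure mu1 A - emeasure (marg1 nu M1) A"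
      using resid1[OF gs gm1] unfolding r1_def by blast
    have rr2: "\<forall>A\<in>sets M2. emeasure r2 A = emeasure mu2 A - emeasure (marg2 nu M2) A"
      using resid2[OF gs gm2] unfolding r2_def by blast
    have gsS: "sets nu = sets (M1 \<Otimes>\<^sub>M M2)" using gs unfolding \<Sigma>_def .
    show ?thesis
    proof (cases "S \<le> emeasure nu B + ennreal e")
      case True
      define d where "d = null_measure (M1 \<Otimes>\<^sub>M M2)"
      have sd: "sets d = sets nu" unfolding d_def using gs \<Sigma>_def by simp
      have md: "A \<in> \<Sigma> \<Longrightarrow> emeasure (madd nu d) A = emeasure nu A" for A
        using madd_props(3)[OF sd, of A] gs by (simp add: d_def)
      have smd: "sets (madd nu d) = sets (M1 \<Otimes>\<^sub>M M2)" using madd_props(1)[OF sd] gs \<Sigma>_def by simp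
      have "good (madd nu d)"
        unfolding good_def
      proof (intro conjI ballI)
        show "sets (madd nu d) = \<Sigma>" using smd \<Sigma>_def by simp
        show "emeasure (madd nu d) (\<Omega> - B) = 0" using md[OF DB] g0 by auto
        fix A assume A: "A \<in> sets M1"
        show "emeasure (marg1 (madd nu d) M1) A \<le> emeasure mu1 A"
          using marg1_eq[OF smd A] marg1_eq[OF gsS A] md[OF R1[OF A]] gm1[rule_format, OF A] by simp
      next
        fix A assume A: "A \<in> sets M2"
        show "emeasure (marg2 (madd nu d) M2) A \<le> emeasure mu2 A"
          using marg2_eq[OF smd A] marg2_eq[OF gsS A] md[OF R2[OF A]] gm2[rule_format, OF A] by simp
      qed
      moreover have "sets d = \<Sigma>" using sd gs by simp
      ultimately show ?thesis using True md[OF Bs] by (intro exI[of _ d]) simp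
    next
      case False
      have S'fin: "S_sup M1 M2 r1 r2 B \<noteq> \<infinity>"
      proof -
        have "S_sup M1 M2 r1 r2 B \<le> emeasure r1 (space M1)" by (rule S_sup_le[OF assms(7)])
        also have "\<dots> \<le> emeasure mu1 (space M1)" using rr1 sets.top[of M1]
          by (simp add: diff_le_self_ennreal)
        finally show ?thesis using one1 by (auto simp: top_unique)
      qed
      have "emeasure nu B < S"
      proof -
        have "emeasure nu B \<le> emeasure nu B + ennreal e" by simp
        then show ?thesis using False by (meson le_less_trans not_le)
      qed
      then have S'pos: "0 < S_sup M1 M2 r1 r2 B" using hyp by (simp add: diff_gr0_ennreal)
      have "S_sup M1 M2 r1 r2 B - ennreal e < S_sup M1 M2 r1 r2 B"
        by (rule ennr_b[OF S'fin S'pos e])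
      then obtain l where l: "l \<in> couplings M1 M2 r1 r2" and lB: "S_sup M1 M2 r1 r2 B - ennreal e < emeasure l B"
        unfolding S_sup_def by (auto simp: less_SUP_iff)
      have ls: "sets l = sets (M1 \<Otimes>\<^sub>M M2)" and lm1: "marg1 l M1 = r1" and lm2: "marg2 l M2 = r2"
        using l by (auto simp: couplings_def)
      define d where "d = density l (indicator B)"
      have sd: "sets d = sets nu" unfolding d_def using ls gs \<Sigma>_def by simp
      have Bl: "B \<in> sets l" using ls assms(7) by simp
      have ed: "A \<in> \<Sigma> \<Longrightarrow> emeasure d A = emeasure l (B \<inter> A)" for A
        unfolding d_def using emeasure_restricted[OF Bl, of A] ls \<Sigma>_def by simp
      have md: "A \<in> \<Sigma> \<Longrightarrow> emeasure (madd nu d) A = emeasure nu A + emeasure l (B \<inter> A)" for A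
        using madd_props(3)[OF sd, of A] gs ed by simp
      have smd: "sets (madd nu d) = sets (M1 \<Otimes>\<^sub>M M2)" using madd_props(1)[OF sd] gs \<Sigma>_def by simp
      have "good (madd nu d)"
        unfolding good_def
      proof (intro conjI ballI)
        show "sets (madd nu d) = \<Sigma>" using smd \<Sigma>_def by simp
        have "B \<inter> (\<Omega> - B) = {}" by auto
        then show "emeasure (madd nu d) (\<Omega> - B) = 0" using md[OF DB] g0 by auto
        fix A assume A: "A \<in> sets M1"
        have "emeasure (marg1 (madd nu d) M1) A = emeasure nu (A \<times> space M2) + emeasure l (B \<inter> (A \<times> space M2))"
          using marg1_eq[OF smd A] md[OF R1[OF A]] by simp
        also have "\<dots> \<le> emeasure nu (A \<times> space M2) + emeasure l (A \<times> space M2)"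
          using R1[OF A] ls \<Sigma>_def by (intro add_left_mono emeasure_mono) auto
        also have "\<dots> = emeasure (marg1 nu M1) A + emeasure r1 A"
          using marg1_eq[OF gsS A] marg1_eq[OF ls A] lm1 by simp
        also have "\<dots> = emeasure mu1 A" using rr1[rule_format, OF A] gm1[rule_format, OF A] addle by simp
        finally show "emeasure (marg1 (madd nu d) M1) A \<le> emeasure mu1 A" .
      next
        fix A assume A: "A \<in> sets M2"
        have "emeasure (marg2 (madd nu d) M2) A = emeasure nu (space M1 \<times> A) + emeasure l (B \<inter> (space M1 \<times> A))"
          using marg2_eq[OF smd A] md[OF R2[OF A]] by simp
        also have "\<dots> \<le> emeasure nu (space M1 \<times> A) + emeasure l (space M1 \<times> A)"
          using R2[OF A] ls \<Sigma>_def by (intro add_left_mono emeasure_mono) auto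
        also have "\<dots> = emeasure (marg2 nu M2) A + emeasure r2 A"
          using marg2_eq[OF gsS A] marg2_eq[OF ls A] lm2 by simp
        also have "\<dots> = emeasure mu2 A" using rr2[rule_format, OF A] gm2[rule_format, OF A] addle by simp
        finally show "emeasure (marg2 (madd nu d) M2) A \<le> emeasure mu2 A" .
      qed
      moreover have "sets d = \<Sigma>" using sd gs by simp
      moreover have "S \<le> emeasure (madd nu d) B + ennreal e"
      proof -
        have "S - emeasure nu B - ennreal e < emeasure l B" using lB hyp by simp
        then have "S \<le> emeasure nu B + emeasure l B + ennreal e" by (rule ennr_a)
        then show ?thesis using md[OF Bs] by simp
      qed
      ultimately show ?thesis by blast
    qed
  qed

  define F where "F n nu = (SOME d. sets d = \<Sigma> \<and> good (madd nu d) \<and> S \<le> emeasure (madd nu d) B + ennreal (1 / Suc n))" for n nu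
  have F: "sets (F n nu) = \<Sigma> \<and> good (madd nu (F n nu)) \<and> S \<le> emeasure (madd nu (F n nu)) B + ennreal (1 / Suc n)"
    if "good nu" for n nu
    unfolding F_def by (rule someI_ex) (rule step[OF that], simp)
  define nus where "nus = rec_nat (null_measure (M1 \<Otimes>\<^sub>M M2)) (\<lambda>n nu. madd nu (F n nu))"
  have nus0: "nus 0 = null_measure (M1 \<Otimes>\<^sub>M M2)" unfolding nus_def by simp
  have nusS: "nus (Suc n) = madd (nus n) (F n (nus n))" for n unfolding nus_def by simp
  have good0: "good (null_measure (M1 \<Otimes>\<^sub>M M2))"
    unfolding good_def
  proof (intro conjI ballI)
    show "sets (null_measure (M1 \<Otimes>\<^sub>M M2)) = \<Sigma>" unfolding \<Sigma>_def by simp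
    show "emeasure (null_measure (M1 \<Otimes>\<^sub>M M2)) (\<Omega> - B) = 0" by simp
    fix A assume A: "A \<in> sets M1"
    show "emeasure (marg1 (null_measure (M1 \<Otimes>\<^sub>M M2)) M1) A \<le> emeasure mu1 A"
      using marg1_eq[of "null_measure (M1 \<Otimes>\<^sub>M M2)" M1 M2 A] A by simp
  next
    fix A assume A: "A \<in> sets M2"
    show "emeasure (marg2 (null_measure (M1 \<Otimes>\<^sub>M M2)) M2) A \<le> emeasure mu2 A"
      using marg2_eq[of "null_measure (M1 \<Otimes>\<^sub>M M2)" M1 M2 A] A by simp
  qed
  have goodn: "good (nus n)" for n
  proof (induction n)
    case 0 then show ?case using good0 nus0 by simp
  next
    case (Suc n) then show ?case using F[OF Suc] nusS by simp
  qed
  have setsn: "sets (nus n) = \<Sigma>" for n using goodn[of n] unfolding good_def by simp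
  have nus_step: "emeasure (nus (Suc n)) A = emeasure (nus n) A + emeasure (F n (nus n)) A" if "A \<in> \<Sigma>" for n A
    using madd_props(3)[of "F n (nus n)" "nus n" A] F[OF goodn[of n]] setsn[of n] that nusS by simp
  have inc: "incseq (\<lambda>n. emeasure (nus n) A)" if "A \<in> \<Sigma>" for A
    by (rule incseq_SucI) (simp add: nus_step[OF that])
  have sets0: "sets (nus 0) = \<Sigma>" by (rule setsn)
  note ms = msup_props[of nus, unfolded sets0, OF setsn inc]
  define nuinf where "nuinf = msup nus"
  have si: "sets nuinf = sets (M1 \<Otimes>\<^sub>M M2)" using ms(1) \<Sigma>_def nuinf_def by simp
  have ei: "A \<in> \<Sigma> \<Longrightarrow> emeasure nuinf A = (SUP n. emeasure (nus n) A)" for A using ms(3) nuinf_def by simp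
  have gi1: "\<forall>A\<in>sets M1. emeasure (marg1 nuinf M1) A \<le> emeasure mu1 A"
  proof
    fix A assume A: "A \<in> sets M1"
    have "emeasure (nus n) (A \<times> space M2) \<le> emeasure mu1 A" for n
      using goodn[of n] A marg1_eq[of "nus n" M1 M2 A] setsn[of n] unfolding good_def \<Sigma>_def by auto
    then show "emeasure (marg1 nuinf M1) A \<le> emeasure mu1 A"
      using marg1_eq[OF si A] ei[OF R1[OF A]] by (simp add: SUP_least)
  qed
  have gi2: "\<forall>A\<in>sets M2. emeasure (marg2 nuinf M2) A \<le> emeasure mu2 A"
  proof
    fix A assume A: "A \<in> sets M2"
    have "emeasure (nus n) (space M1 \<times> A) \<le> emeasure mu2 A" for n
      using goodn[of n] A marg2_eq[of "nus n" M1 M2 A] setsn[of n] unfolding good_def \<Sigma>_def by auto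
    then show "emeasure (marg2 nuinf M2) A \<le> emeasure mu2 A"
      using marg2_eq[OF si A] ei[OF R2[OF A]] by (simp add: SUP_least)
  qed
  have Sle: "S \<le> emeasure nuinf B"
  proof (rule ennreal_le_epsilon)
    fix e :: real assume e: "0 < e"
    obtain n where n: "inverse (real (Suc n)) < e" using reals_Archimedean[OF e] by auto
    have "S \<le> emeasure (nus (Suc n)) B + ennreal (1 / Suc n)"
      using F[OF goodn[of n]] nusS by simp
    also have "\<dots> \<le> emeasure nuinf B + ennreal e"
    proof (rule add_mono)
      show "emeasure (nus (Suc n)) B \<le> emeasure nuinf B" using ei[OF Bs] by (auto intro: SUP_upper)
      show "ennreal (1 / Suc n) \<le> ennreal e" using n by (intro ennreal_leI) (simp add: inverse_eq_divide)
    qed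
    finally show "S \<le> emeasure nuinf B + ennreal e" .
  qed
  define r1 where "r1 = measure_diff mu1 (marg1 nuinf M1)"
  define r2 where "r2 = measure_diff mu2 (marg2 nuinf M2)"
  have siS: "sets nuinf = \<Sigma>" using si \<Sigma>_def by simp
  note q1 = resid1[OF siS gi1, folded r1_def]
  note q2 = resid2[OF siS gi2, folded r2_def]
  define m where "m = emeasure nuinf \<Omega>"
  have mm1: "emeasure (marg1 nuinf M1) (space M1) = m" using marg1_eq[OF si sets.top[of M1]] Om m_def by simp
  have mm2: "emeasure (marg2 nuinf M2) (space M2) = m" using marg2_eq[OF si sets.top[of M2]] Om m_def by simp
  have sr1: "space r1 = space M1" using sets_eq_imp_space_eq q1 by blast
  have sr2: "space r2 = space M2" using sets_eq_imp_space_eq q2 by blast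
  have r1m: "emeasure r1 (space r1) = 1 - m" using q1 sets.top[of M1] sr1 one1 mm1 by simp
  have r2m: "emeasure r2 (space r2) = 1 - m" using q2 sets.top[of M2] sr2 one2 mm2 by simp
  have fm: "1 - m \<noteq> \<infinity>" by (simp add: ennreal_minus_eq_top)
  define rho where "rho = scale_measure (1 / (1 - m)) (r1 \<Otimes>\<^sub>M r2)"
  have sq1: "sets r1 = sets M1" using q1 by blast
  have sq2: "sets r2 = sets M2" using q2 by blast
  note pc = prod_coupling[OF sq1 sq2 r1m r2m fm, folded rho_def]
  have rs: "sets rho = sets nuinf" using pc(1) q1 q2 si by simp
  define mu where "mu = madd nuinf rho"
  have smu: "sets mu = sets (M1 \<Otimes>\<^sub>M M2)" using madd_props(1)[OF rs] si mu_def by simp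
  have emu: "A \<in> \<Sigma> \<Longrightarrow> emeasure mu A = emeasure nuinf A + emeasure rho A" for A
    using madd_props(3)[OF rs] siS mu_def by simp
  have mg1: "marg1 mu M1 = mu1"
  proof (rule measure_eqI)
    show "sets (marg1 mu M1) = sets mu1" using assms(4) by (simp add: sets_marg1)
    fix A assume "A \<in> sets (marg1 mu M1)"
    then have A: "A \<in> sets M1" by (simp add: sets_marg1)
    have "emeasure (marg1 mu M1) A = emeasure nuinf (A \<times> space M2) + emeasure rho (A \<times> space M2)"
      using marg1_eq[OF smu A] emu[OF R1[OF A]] by simp
    also have "\<dots> = emeasure (marg1 nuinf M1) A + emeasure r1 A" using marg1_eq[OF si A] pc(2)[OF A] q1 by simp
    also have "\<dots> = emeasure mu1 A" using q1 A gi1 addle by simp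
    finally show "emeasure (marg1 mu M1) A = emeasure mu1 A" .
  qed
  have mg2: "marg2 mu M2 = mu2"
  proof (rule measure_eqI)
    show "sets (marg2 mu M2) = sets mu2" using assms(6) by (simp add: sets_marg2)
    fix A assume "A \<in> sets (marg2 mu M2)"
    then have A: "A \<in> sets M2" by (simp add: sets_marg2)
    have "emeasure (marg2 mu M2) A = emeasure nuinf (space M1 \<times> A) + emeasure rho (space M1 \<times> A)"
      using marg2_eq[OF smu A] emu[OF R2[OF A]] by simp
    also have "\<dots> = emeasure (marg2 nuinf M2) A + emeasure r2 A" using marg2_eq[OF si A] pc(3)[OF A] q2 by simp
    also have "\<dots> = emeasure mu2 A" using q2 A gi2 addle by simp
    finally show "emeasure (marg2 mu M2) A = emeasure mu2 A" .
  qed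
  have cp: "mu \<in> couplings M1 M2 mu1 mu2" unfolding couplings_def using smu mg1 mg2 by simp
  have "emeasure mu B \<le> S" unfolding S_def S_sup_def using cp by (rule SUP_upper)
  moreover have "S \<le> emeasure mu B" using Sle emu[OF Bs] by (simp add: order_trans)
  moreover have "prob_space mu"
  proof (rule prob_spaceI)
    have "space mu = space M1 \<times> space M2" using sets_eq_imp_space_eq[OF smu] by (simp add: space_pair_measure)
    then have "emeasure mu (space mu) = emeasure (marg1 mu M1) (space M1)" using marg1_eq[OF smu sets.top[of M1]] by simp
    then show "emeasure mu (space mu) = 1" using mg1 one1 by simp
  qed
  ultimately show ?thesis using cp unfolding S_def by (intro bexI[of _ mu]) auto
qed

end
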